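(* Let $\rho>0$, $\xi>0$, and $H_0=\frac{1}{2(1+\rho r^2)}\big(P_r^2+\frac{P_\phi^2}{r^2}+\xi r^2\big)$ on $(r,\phi)\in(0,\infty)\times\mathbb{S}^1$, with quadratic integrals $S_1=\cos(2\phi)P_r\frac{P_\phi}{r}+\sin(2\phi)\big(H_0-\frac{P_\phi^2}{r^2}\big)$, $S_2=-\sin(2\phi)P_r\frac{P_\phi}{r}+\cos(2\phi)\big(H_0-\frac{P_\phi^2}{r^2}\big)$. Consider the closed trajectories on level sets $H_0=E$, $P_\phi=L>0$ with $E_+<E<\xi/(2\rho)$, where $E_+=L^2(-\rho+\sqrt{\rho^2+\xi/L^2})$, with $\phi$ normalized so that $\phi=0$ where $r$ is minimal. Then the action coordinates $I_\phi=\frac1{2\pi}\oint P_\phi\,d\phi$, $I_r=\frac1{2\pi}\oint P_r\,dr$ are $$I_\phi=L,\qquad J\equiv I_r+I_\phi=\frac{E}{\sqrt{\xi-2\rho E}},$$ the Hamiltonian is $H(J)=J\big(\sqrt{\xi+\rho^2J^2}-\rho J\big)$, and the quadratic integrals take the values $$S_1=0,\qquad S_2=-\sqrt{J^2-I_\phi^2}\,\big(\sqrt{\xi+\rho^2J^2}-\rho J\big).$$ *)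

theory Defs
  imports "HOL-Analysis.Analysis"
begin

text \<open>Hamiltonian on phase space with coordinates (r, phi, P_r, P_phi);
  phi is a real lift of the angle on the circle. H0 does not depend on phi.\<close>
definition H0 :: "real \<Rightarrow> real \<Rightarrow> real \<Rightarrow> real \<Rightarrow> real \<Rightarrow> real \<Rightarrow> real" where
  "H0 \<rho> \<xi> r \<phi> pr p\<phi> = (pr\<^sup>2 + p\<phi>\<^sup>2 / r\<^sup>2 + \<xi> * r\<^sup>2) / (2 * (1 + \<rho> * r\<^sup>2))"

definition S1 :: "real \<Rightarrow> real \<Rightarrow> real \<Rightarrow> real \<Rightarrow> real \<Rightarrow> real \<Rightarrow> real" where
  "S1 \<rho> \<xi> r \<phi> pr p\<phi> =
     cos (2 * \<phi>) * pr * (p\<phi> / r) + sin (2 * \<phi>) * (H0 \<rho> \<xi> r \<phi> pr p\<phi> - p\<phi>\<^sup>2 / r\<^sup>2)"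

definition S2 :: "real \<Rightarrow> real \<Rightarrow> real \<Rightarrow> real \<Rightarrow> real \<Rightarrow> real \<Rightarrow> real" where
  "S2 \<rho> \<xi> r \<phi> pr p\<phi> =
     - sin (2 * \<phi>) * pr * (p\<phi> / r) + cos (2 * \<phi>) * (H0 \<rho> \<xi> r \<phi> pr p\<phi> - p\<phi>\<^sup>2 / r\<^sup>2)"

definition hamilton_solution ::
  "real \<Rightarrow> real \<Rightarrow> (real \<Rightarrow> real) \<Rightarrow> (real \<Rightarrow> real) \<Rightarrow> (real \<Rightarrow> real) \<Rightarrow> (real \<Rightarrow> real) \<Rightarrow> bool" where
  "hamilton_solution \<rho> \<xi> r \<phi> pr p\<phi> \<longleftrightarrow>
     (\<forall>t. r t > 0 \<and>
       (r has_real_derivative deriv (\<lambda>y. H0 \<rho> \<xi> (r t) (\<phi> t) y (p\<phi> t)) (pr t)) (at t) \<and>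
       (\<phi> has_real_derivative deriv (\<lambda>y. H0 \<rho> \<xi> (r t) (\<phi> t) (pr t) y) (p\<phi> t)) (at t) \<and>
       (pr has_real_derivative - deriv (\<lambda>y. H0 \<rho> \<xi> y (\<phi> t) (pr t) (p\<phi> t)) (r t)) (at t) \<and>
       (p\<phi> has_real_derivative - deriv (\<lambda>y. H0 \<rho> \<xi> (r t) y (pr t) (p\<phi> t)) (\<phi> t)) (at t))"

definition is_period ::
  "(real \<Rightarrow> real) \<Rightarrow> (real \<Rightarrow> real) \<Rightarrow> (real \<Rightarrow> real) \<Rightarrow> (real \<Rightarrow> real) \<Rightarrow> real \<Rightarrow> bool" where
  "is_period r \<phi> pr p\<phi> T \<longleftrightarrow>
     (\<forall>t. r (t + T) = r t \<and> pr (t + T) = pr t \<and> p\<phi> (t + T) = p\<phi> t \<and>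
          (\<exists>k::int. \<phi> (t + T) = \<phi> t + 2 * pi * of_int k))"

definition minimal_period ::
  "(real \<Rightarrow> real) \<Rightarrow> (real \<Rightarrow> real) \<Rightarrow> (real \<Rightarrow> real) \<Rightarrow> (real \<Rightarrow> real) \<Rightarrow> real \<Rightarrow> bool" where
  "minimal_period r \<phi> pr p\<phi> T \<longleftrightarrow>
     T > 0 \<and> is_period r \<phi> pr p\<phi> T \<and> (\<forall>T'. 0 < T' \<and> T' < T \<longrightarrow> \<not> is_period r \<phi> pr p\<phi> T')"

definition action :: "(real \<Rightarrow> real) \<Rightarrow> (real \<Rightarrow> real) \<Rightarrow> real \<Rightarrow> real" where
  "action p q T = integral {0..T} (\<lambda>t. p t * deriv q t) / (2 * pi)"

end

theory Submission
  imports Defs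
begin

lemma dH_pr: assumes "(\<rho>::real) > 0"
  shows "((\<lambda>y. H0 \<rho> \<xi> r f y q) has_real_derivative p/(1+\<rho>*r\<^sup>2)) (at p)"
proof -
  define d where "d = 1+\<rho>*r\<^sup>2"
  have d: "d > 0" using assms by (simp add: d_def add_pos_nonneg)
  have e: "(\<lambda>y. H0 \<rho> \<xi> r f y q) = (\<lambda>y. (y\<^sup>2 + (q\<^sup>2/r\<^sup>2 + \<xi>*r\<^sup>2))/(2*d))"
    unfolding H0_def d_def by (simp add: add.assoc)
  have "((\<lambda>y. (y\<^sup>2 + (q\<^sup>2/r\<^sup>2 + \<xi>*r\<^sup>2))/(2*d)) has_real_derivative p/d) (at p)"
    using d by (auto intro!: derivative_eq_intros)
  then show ?thesis using e d_def by simp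
qed

lemma dH_q: assumes "(\<rho>::real) > 0" "r \<noteq> 0"
  shows "((\<lambda>y. H0 \<rho> \<xi> r f p y) has_real_derivative q/(r\<^sup>2*(1+\<rho>*r\<^sup>2))) (at q)"
proof -
  define d where "d = 1+\<rho>*r\<^sup>2"
  have d: "d > 0" using assms by (simp add: d_def add_pos_nonneg)
  have e: "(\<lambda>y. H0 \<rho> \<xi> r f p y) = (\<lambda>y. (y\<^sup>2/r\<^sup>2 + (p\<^sup>2 + \<xi>*r\<^sup>2))/(2*d))"
    unfolding H0_def d_def by (simp add: algebra_simps)
  have "((\<lambda>y. (y\<^sup>2/r\<^sup>2 + (p\<^sup>2 + \<xi>*r\<^sup>2))/(2*d)) has_real_derivative q/(r\<^sup>2*d)) (at q)"
    using d assms by (auto intro!: derivative_eq_intros simp: field_simps)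
  then show ?thesis using e d_def by simp
qed

lemma dH_r: assumes "(\<rho>::real) > 0" "r > 0" "H0 \<rho> \<xi> r f p q = E"
  shows "((\<lambda>y. H0 \<rho> \<xi> y f p q) has_real_derivative
     ((\<xi> - 2*\<rho>*E)*r - q\<^sup>2/r^3)/(1+\<rho>*r\<^sup>2)) (at r)"
proof -
  define d where "d = 1+\<rho>*r\<^sup>2"
  have d: "d > 0" using assms by (simp add: d_def add_pos_nonneg)
  have N: "p\<^sup>2+q\<^sup>2/r\<^sup>2+\<xi>*r\<^sup>2 = 2*E*d" using assms(3) d unfolding H0_def d_def
    by (simp add: field_simps)
  have 1: "((\<lambda>y. p\<^sup>2+q\<^sup>2/y\<^sup>2+\<xi>*y\<^sup>2) has_real_derivative (-2*q\<^sup>2/r^3+2*\<xi>*r)) (at r)"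
    using assms by (auto intro!: derivative_eq_intros simp: field_simps power2_eq_square power3_eq_cube)
  have 2: "((\<lambda>y. 2*(1+\<rho>*y\<^sup>2)) has_real_derivative 4*\<rho>*r) (at r)"
    by (auto intro!: derivative_eq_intros)
  have 3: "((\<lambda>y. (p\<^sup>2+q\<^sup>2/y\<^sup>2+\<xi>*y\<^sup>2) / (2*(1+\<rho>*y\<^sup>2))) has_real_derivative
     ((-2*q\<^sup>2/r^3+2*\<xi>*r) * (2*d) - (2*E*d) * (4*\<rho>*r)) / ((2*d)*(2*d))) (at r)"
    using DERIV_divide[OF 1 2] d N unfolding d_def by simp
  have 4: "((-2*q\<^sup>2/r^3+2*\<xi>*r) * (2*d) - (2*E*d) * (4*\<rho>*r)) / ((2*d)*(2*d))
      = ((\<xi> - 2*\<rho>*E)*r - q\<^sup>2/r^3)/d"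
    using d by (simp add: field_simps)
  have 5: "(\<lambda>y. H0 \<rho> \<xi> y f p q) = (\<lambda>y. (p\<^sup>2+q\<^sup>2/y\<^sup>2+\<xi>*y\<^sup>2) / (2*(1+\<rho>*y\<^sup>2)))"
    by (simp add: H0_def fun_eq_iff)
  show ?thesis unfolding 5 using 3[unfolded 4] by (simp only: d_def)
qed

lemma aux: "(\<Omega>::real) > 0 \<Longrightarrow> (1+\<rho>*(a^2+b^2)/2)/\<Omega> + \<rho>*(a^2-b^2)/(4*\<Omega>)*(2*(2*k-1))
   = (1+\<rho>*(a^2*k+b^2*(1-k)))/\<Omega>"
  by (simp add: field_simps)

theorem proposition20:
  fixes \<rho> \<xi> E L T :: real and r \<phi> pr p\<phi> :: "real \<Rightarrow> real"
  assumes "\<rho> > 0" and "\<xi> > 0" and "L > 0"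
    and "L\<^sup>2 * (- \<rho> + sqrt (\<rho>\<^sup>2 + \<xi> / L\<^sup>2)) < E" and "E < \<xi> / (2 * \<rho>)"
    and "hamilton_solution \<rho> \<xi> r \<phi> pr p\<phi>"
    and "\<forall>t. H0 \<rho> \<xi> (r t) (\<phi> t) (pr t) (p\<phi> t) = E"
    and "\<forall>t. p\<phi> t = L"
    and "minimal_period r \<phi> pr p\<phi> T"
    and "\<exists>t0. (\<forall>t. r t0 \<le> r t) \<and> \<phi> t0 = 0"
  shows "action p\<phi> \<phi> T = L
    \<and> action pr r T + action p\<phi> \<phi> T = E / sqrt (\<xi> - 2 * \<rho> * E)
    \<and> (let J = action pr r T + action p\<phi> \<phi> T; I\<phi> = action p\<phi> \<phi> T in
         E = J * (sqrt (\<xi> + \<rho>\<^sup>2 * J\<^sup>2) - \<rho> * J)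
       \<and> (\<forall>t. S1 \<rho> \<xi> (r t) (\<phi> t) (pr t) (p\<phi> t) = 0)
       \<and> (\<forall>t. S2 \<rho> \<xi> (r t) (\<phi> t) (pr t) (p\<phi> t)
              = - sqrt (J\<^sup>2 - I\<phi>\<^sup>2) * (sqrt (\<xi> + \<rho>\<^sup>2 * J\<^sup>2) - \<rho> * J)))"
proof -
  obtain t0 where t0min: "\<forall>t. r t0 \<le> r t" and t0phi: "\<phi> t0 = 0" using assms(10) by blast
  define \<Omega>2 where "\<Omega>2 = \<xi> - 2*\<rho>*E"
  have "2*\<rho>*E < \<xi>" using assms(1,5) by (simp add: field_simps)
  then have \<Omega>2pos: "\<Omega>2 > 0" by (simp add: \<Omega>2_def)
  define \<Omega> where "\<Omega> = sqrt \<Omega>2"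
  have \<Omega>pos: "\<Omega> > 0" using \<Omega>2pos by (simp add: \<Omega>_def)
  have \<Omega>sq: "\<Omega>*\<Omega> = \<Omega>2" using \<Omega>2pos by (simp add: \<Omega>_def)
  define D where "D t = 1 + \<rho>*(r t)^2" for t
  have Dpos: "D t > 0" for t using assms(1) by (simp add: D_def add_pos_nonneg)
  have hs: "\<forall>t. r t > 0 \<and>
       (r has_real_derivative deriv (\<lambda>y. H0 \<rho> \<xi> (r t) (\<phi> t) y (p\<phi> t)) (pr t)) (at t) \<and>
       (\<phi> has_real_derivative deriv (\<lambda>y. H0 \<rho> \<xi> (r t) (\<phi> t) (pr t) y) (p\<phi> t)) (at t) \<and>
       (pr has_real_derivative - deriv (\<lambda>y. H0 \<rho> \<xi> y (\<phi> t) (pr t) (p\<phi> t)) (r t)) (at t)"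
    using assms(6) unfolding hamilton_solution_def by blast
  have rpos: "r t > 0" for t using hs by blast
  have pphi: "p\<phi> t = L" for t using assms(8) by blast
  have en: "H0 \<rho> \<xi> (r t) (\<phi> t) (pr t) L = E" for t using assms(7) pphi by metis
  have en2: "(pr t)^2 + L^2/(r t)^2 + \<Omega>2*(r t)^2 = 2*E" for t
  proof -
    have "((pr t)^2 + L^2/(r t)^2 + \<xi>*(r t)^2) / (2*D t) = E" using en[of t] by (simp add: H0_def D_def)
    then have "(pr t)^2 + L^2/(r t)^2 + \<xi>*(r t)^2 = 2*E*D t" using Dpos[of t] by (simp add: field_simps)
    then show ?thesis by (simp add: D_def \<Omega>2_def algebra_simps)
  qed
  have hr: "(r has_real_derivative pr t / D t) (at t)" for t
  proof -
    have "deriv (\<lambda>y. H0 \<rho> \<xi> (r t) (\<phi> t) y (p\<phi> t)) (pr t) = pr t / D t"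
      unfolding D_def by (rule DERIV_imp_deriv[OF dH_pr[OF assms(1)]])
    then show ?thesis using hs by metis
  qed
  have hphi: "(\<phi> has_real_derivative L / ((r t)^2 * D t)) (at t)" for t
  proof -
    have "deriv (\<lambda>y. H0 \<rho> \<xi> (r t) (\<phi> t) (pr t) y) (p\<phi> t) = L / ((r t)^2 * D t)"
      unfolding D_def pphi using rpos[of t] by (intro DERIV_imp_deriv[OF dH_q[OF assms(1)]]) auto
    then show ?thesis using hs by metis
  qed
  have hpr: "(pr has_real_derivative (L^2/(r t)^3 - \<Omega>2 * r t) / D t) (at t)" for t
  proof -
    have "deriv (\<lambda>y. H0 \<rho> \<xi> y (\<phi> t) (pr t) (p\<phi> t)) (r t) = (\<Omega>2 * r t - L^2/(r t)^3) / D t"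
      unfolding D_def pphi \<Omega>2_def using rpos[of t] en[of t]
      by (intro DERIV_imp_deriv[OF dH_r[OF assms(1)]]) auto
    then have "- deriv (\<lambda>y. H0 \<rho> \<xi> y (\<phi> t) (pr t) (p\<phi> t)) (r t) = (L^2/(r t)^3 - \<Omega>2 * r t) / D t"
      using Dpos[of t] by (simp add: field_simps)
    then show ?thesis using hs by metis
  qed
  have rcont: "isCont r t" for t using hr DERIV_isCont by blast
  have "\<exists>F. \<forall>x::real. -\<infinity> < x \<longrightarrow> x < \<infinity> \<longrightarrow> (F has_vector_derivative (\<Omega> / D x)) (at x)"
  proof (rule einterval_antiderivative)
    fix x :: real
    show "isCont (\<lambda>x. \<Omega> / D x) x" unfolding D_def using Dpos[of x]
      by (auto intro!: continuous_intros rcont simp: D_def)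
  qed simp
  then obtain F where F: "\<And>x. (F has_vector_derivative (\<Omega> / D x)) (at x)" by auto
  define \<Theta> where "\<Theta> t = F t - F t0" for t
  have h\<Theta>: "(\<Theta> has_real_derivative \<Omega> / D t) (at t)" for t
  proof -
    have "(F has_real_derivative \<Omega> / D t) (at t)"
      using F[of t] by (simp add: has_real_derivative_iff_has_vector_derivative)
    then show ?thesis unfolding \<Theta>_def[abs_def] by (auto intro!: derivative_eq_intros)
  qed
  have \<Theta>0: "\<Theta> t0 = 0" by (simp add: \<Theta>_def)
  define X where "X t = r t * cos (\<phi> t)" for t
  define Y where "Y t = r t * sin (\<phi> t)" for t
  define V where "V t = pr t * cos (\<phi> t) - L / r t * sin (\<phi> t)" for t
  define W where "W t = pr t * sin (\<phi> t) + L / r t * cos (\<phi> t)" for t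
  have hX: "(X has_real_derivative V t / D t) (at t)" for t
    unfolding X_def[abs_def] V_def using rpos[of t] Dpos[of t]
    by (auto intro!: derivative_eq_intros hr hphi simp: field_simps power2_eq_square)
  have hY: "(Y has_real_derivative W t / D t) (at t)" for t
    unfolding Y_def[abs_def] W_def using rpos[of t] Dpos[of t]
    by (auto intro!: derivative_eq_intros hr hphi simp: field_simps power2_eq_square)
  have hV: "(V has_real_derivative - \<Omega>2 * X t / D t) (at t)" for t
    unfolding V_def[abs_def] X_def using rpos[of t] Dpos[of t]
    by (auto intro!: derivative_eq_intros hr hphi hpr simp: field_simps power2_eq_square power3_eq_cube)
  have hW: "(W has_real_derivative - \<Omega>2 * Y t / D t) (at t)" for t
    unfolding W_def[abs_def] Y_def using rpos[of t] Dpos[of t]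
    by (auto intro!: derivative_eq_intros hr hphi hpr simp: field_simps power2_eq_square power3_eq_cube)
  have pr0: "pr t0 = 0"
  proof -
    have "pr t0 / D t0 = 0"
      by (rule DERIV_local_min[OF hr[of t0], of 1]) (use t0min in auto)
    then show ?thesis using Dpos[of t0] by simp
  qed
  define a where "a = r t0"
  have apos: "a > 0" using rpos by (simp add: a_def)
  define b where "b = L / (a*\<Omega>)"
  have bpos: "b > 0" using apos \<Omega>pos assms(3) by (simp add: b_def)
  define Q1 where "Q1 t = (X t - a * cos (\<Theta> t))^2 + (V t/\<Omega> + a * sin (\<Theta> t))^2" for t
  have "(Q1 has_real_derivative 0) (at t)" for t
  proof -
    have "(Q1 has_real_derivative
      2*(X t - a * cos (\<Theta> t)) * (V t / D t + a * sin (\<Theta> t)*(\<Omega> / D t)) +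
      2*(V t/\<Omega> + a * sin (\<Theta> t)) * ((- \<Omega>2 * X t / D t)/\<Omega> + a * cos (\<Theta> t)*(\<Omega> / D t))) (at t)"
      unfolding Q1_def[abs_def] using \<Omega>pos Dpos[of t]
      by (auto intro!: derivative_eq_intros hX hV h\<Theta> simp: divide_inverse algebra_simps)
    moreover have "2*(X t - a * cos (\<Theta> t)) * (V t / D t + a * sin (\<Theta> t)*(\<Omega> / D t)) +
      2*(V t/\<Omega> + a * sin (\<Theta> t)) * ((- \<Omega>2 * X t / D t)/\<Omega> + a * cos (\<Theta> t)*(\<Omega> / D t)) = 0"
      using \<Omega>pos Dpos[of t] unfolding \<Omega>sq[symmetric] by (simp add: field_simps)
    ultimately show ?thesis by simp
  qed
  then have "Q1 t = Q1 t0" for t by (meson DERIV_isconst_all)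
  moreover have "Q1 t0 = 0" by (simp add: Q1_def X_def V_def t0phi \<Theta>0 pr0 a_def)
  ultimately have Q1z: "Q1 t = 0" for t by simp
  have Xe: "X t = a * cos (\<Theta> t)" for t
    using Q1z[of t] \<Omega>pos unfolding Q1_def sum_power2_eq_zero_iff by simp
  have Ve: "V t = - a*\<Omega> * sin (\<Theta> t)" for t
  proof -
    have "V t / \<Omega> = - a * sin (\<Theta> t)" using Q1z[of t] unfolding Q1_def sum_power2_eq_zero_iff by simp
    then show ?thesis using \<Omega>pos by (simp add: field_simps)
  qed
  define Q2 where "Q2 t = (Y t - b * sin (\<Theta> t))^2 + (W t/\<Omega> - b * cos (\<Theta> t))^2" for t
  have "(Q2 has_real_derivative 0) (at t)" for t
  proof -
    have "(Q2 has_real_derivative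
      2*(Y t - b * sin (\<Theta> t)) * (W t / D t - b * cos (\<Theta> t)*(\<Omega> / D t)) +
      2*(W t/\<Omega> - b * cos (\<Theta> t)) * ((- \<Omega>2 * Y t / D t)/\<Omega> + b * sin (\<Theta> t)*(\<Omega> / D t))) (at t)"
      unfolding Q2_def[abs_def] using \<Omega>pos
      by (auto intro!: derivative_eq_intros hY hW h\<Theta> simp: divide_inverse algebra_simps)
    moreover have "2*(Y t - b * sin (\<Theta> t)) * (W t / D t - b * cos (\<Theta> t)*(\<Omega> / D t)) +
      2*(W t/\<Omega> - b * cos (\<Theta> t)) * ((- \<Omega>2 * Y t / D t)/\<Omega> + b * sin (\<Theta> t)*(\<Omega> / D t)) = 0"
      using \<Omega>pos Dpos[of t] unfolding \<Omega>sq[symmetric] by (simp add: field_simps)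
    ultimately show ?thesis by simp
  qed
  then have "Q2 t = Q2 t0" for t by (meson DERIV_isconst_all)
  moreover have "Q2 t0 = 0" using \<Omega>pos apos
    by (simp add: Q2_def Y_def W_def t0phi \<Theta>0 pr0 a_def b_def)
  ultimately have Q2z: "Q2 t = 0" for t by simp
  have Ye: "Y t = b * sin (\<Theta> t)" for t
    using Q2z[of t] \<Omega>pos unfolding Q2_def sum_power2_eq_zero_iff by simp
  have We: "W t = b*\<Omega> * cos (\<Theta> t)" for t
  proof -
    have "W t / \<Omega> = b * cos (\<Theta> t)" using Q2z[of t] unfolding Q2_def sum_power2_eq_zero_iff by simp
    then show ?thesis using \<Omega>pos by (simp add: field_simps)
  qed
  have r2: "(r t)^2 = a^2 * (cos (\<Theta> t))^2 + b^2 * (sin (\<Theta> t))^2" for t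
  proof -
    have "(r t)^2 = (X t)^2 + (Y t)^2"
      by (simp add: X_def Y_def power_mult_distrib flip: distrib_left)
    then show ?thesis by (simp add: Xe Ye power_mult_distrib)
  qed
  have rsq: "r t = sqrt ((X t)^2 + (Y t)^2)" for t
    using rpos[of t] by (simp add: X_def Y_def power_mult_distrib flip: distrib_left)
  define c1 where "c1 = (1 + \<rho>*(a^2+b^2)/2)/\<Omega>"
  define c2 where "c2 = \<rho>*(a^2-b^2)/(4*\<Omega>)"
  define G where "G \<theta> = c1*\<theta> + c2 * sin (2*\<theta>)" for \<theta>
  have hG: "(G has_real_derivative (1 + \<rho>*(a^2 * (cos \<theta>)^2 + b^2 * (sin \<theta>)^2))/\<Omega>) (at \<theta>)" for \<theta>
  proof -
    have "(G has_real_derivative c1 + c2 * (2 * cos (2*\<theta>))) (at \<theta>)"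
      unfolding G_def[abs_def] by (auto intro!: derivative_eq_intros)
    moreover have "c1 + c2 * (2 * cos (2*\<theta>)) = (1 + \<rho>*(a^2 * (cos \<theta>)^2 + b^2 * (sin \<theta>)^2))/\<Omega>"
      unfolding cos_double_cos sin_squared_eq c1_def c2_def using \<Omega>pos
      by (rule aux)
    ultimately show ?thesis by simp
  qed
  have Gpos: "(1 + \<rho>*(a^2 * (cos \<theta>)^2 + b^2 * (sin \<theta>)^2))/\<Omega> > 0" for \<theta>
    using \<Omega>pos assms(1) by (intro divide_pos_pos add_pos_nonneg) auto
  have Gmono: "G x < G y" if "x < y" for x y
    using DERIV_pos_imp_increasing[OF that] hG Gpos by blast
  have Ginj: "x = y" if "G x = G y" for x y
    using Gmono[of x y] Gmono[of y x] that by (cases x y rule: linorder_cases) auto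
  have "((\<lambda>t. G (\<Theta> t) - t) has_real_derivative 0) (at t)" for t
  proof -
    have "((\<lambda>t. G (\<Theta> t)) has_real_derivative
        (1 + \<rho>*(a^2 * (cos (\<Theta> t))^2 + b^2 * (sin (\<Theta> t))^2))/\<Omega> * (\<Omega> / D t)) (at t)"
      by (rule DERIV_chain2[OF hG h\<Theta>])
    moreover have "(1 + \<rho>*(a^2 * (cos (\<Theta> t))^2 + b^2 * (sin (\<Theta> t))^2))/\<Omega> * (\<Omega> / D t) = 1"
      using \<Omega>pos Dpos[of t] by (simp add: D_def r2)
    ultimately show ?thesis by (auto intro!: derivative_eq_intros)
  qed
  then have "G (\<Theta> t) - t = G (\<Theta> t0) - t0" for t by (meson DERIV_isconst_all)
  then have G\<Theta>0: "G (\<Theta> t) - t = - t0" for t by (simp add: \<Theta>0 G_def)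
  have G\<Theta>: "G (\<Theta> t) = t - t0" for t using G\<Theta>0[of t] by linarith
  define P where "P = G (2*pi)"
  have sin4: "sin (2*(x+2*pi)) = sin (2*x)" for x
  proof -
    have "2*(x+2*pi) = 2*x + 2*pi * of_int 2" by simp
    then show ?thesis using sin_cos_eq_iff by blast
  qed
  have Gshift: "G (\<theta> + 2*pi) = G \<theta> + P" for \<theta>
    using sin4[of \<theta>] sin4[of 0] unfolding P_def G_def by (simp add: algebra_simps)
  have Ppos: "P > 0" using Gmono[of 0 "2*pi"] by (simp add: P_def G_def)
  have \<Theta>shiftP: "\<Theta> (t + P) = \<Theta> t + 2*pi" for t
    by (rule Ginj) (simp add: G\<Theta> Gshift)
  have \<Theta>mono: "\<Theta> x < \<Theta> y" if "x < y" for x y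
    using DERIV_pos_imp_increasing[OF that] h\<Theta> Dpos \<Omega>pos by (meson divide_pos_pos)
  have \<Theta>cont: "isCont \<Theta> t" for t using h\<Theta> DERIV_isCont by blast
  have XP: "X (t + P) = X t" and YP: "Y (t + P) = Y t" for t
    by (simp_all add: Xe Ye \<Theta>shiftP)
  have VP: "V (t + P) = V t" and WP: "W (t + P) = W t" for t
    by (simp_all add: Ve We \<Theta>shiftP)
  have rP: "r (t + P) = r t" for t using rsq[of "t+P"] rsq[of t] XP[of t] YP[of t] by simp
  have cosphi: "cos (\<phi> t) = X t / r t" and sinphi: "sin (\<phi> t) = Y t / r t" for t
    using rpos[of t] by (simp_all add: X_def Y_def)
  have prXY: "pr t = (V t * X t + W t * Y t) / r t" for t
  proof -
    have "V t * X t + W t * Y t = r t * pr t"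
      by (simp add: V_def W_def X_def Y_def algebra_simps) (metis distrib_left sin_cos_squared_add3 mult_1_right)
    then show ?thesis using rpos[of t] by simp
  qed
  have isP: "is_period r \<phi> pr p\<phi> P"
    unfolding is_period_def
  proof (intro allI conjI)
    fix t
    show "r (t + P) = r t" by (rule rP)
    show "pr (t + P) = pr t" using prXY[of "t+P"] prXY[of t] rP[of t] XP[of t] YP[of t] VP[of t] WP[of t] by simp
    show "p\<phi> (t + P) = p\<phi> t" by (simp add: pphi)
    have "sin (\<phi> (t+P)) = sin (\<phi> t) \<and> cos (\<phi> (t+P)) = cos (\<phi> t)"
      using cosphi[of "t+P"] cosphi[of t] sinphi[of "t+P"] sinphi[of t] rP[of t] XP[of t] YP[of t] by simp
    then obtain n :: int where "\<phi> (t+P) = \<phi> t + 2*pi*n" using sin_cos_eq_iff by blast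
    then show "\<exists>k::int. \<phi> (t + P) = \<phi> t + 2 * pi * of_int k" by blast
  qed
  have Tpos: "T > 0" and isT: "is_period r \<phi> pr p\<phi> T"
    and Tmin: "\<And>T'. 0 < T' \<Longrightarrow> T' < T \<Longrightarrow> \<not> is_period r \<phi> pr p\<phi> T'"
    using assms(9) unfolding minimal_period_def by blast+
  have "\<not> P < T" using Tmin[OF Ppos] isP by blast
  moreover have "\<not> T < P"
  proof
    assume TP: "T < P"
    obtain k :: int where k: "\<phi> (t0 + T) = \<phi> t0 + 2*pi*k" and rT: "r (t0+T) = r t0"
      using isT unfolding is_period_def by blast
    have "X (t0 + T) = a"
    proof -
      have "cos (\<phi> (t0 + T)) = 1" using k t0phi cos_one_2pi_int[of "\<phi> (t0+T)"]
        by (metis add_0 mult.commute mult.left_commute)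
      then show ?thesis by (simp add: X_def rT a_def)
    qed
    then have "cos (\<Theta> (t0 + T)) = 1" using Xe[of "t0+T"] apos by simp
    then obtain n :: int where n: "\<Theta> (t0+T) = of_int n * 2 * pi" using cos_one_2pi_int by blast
    have "\<Theta> (t0+T) > 0" using \<Theta>mono[of t0 "t0+T"] Tpos \<Theta>0 by simp
    then have "n > 0" using n by (simp add: zero_less_mult_iff)
    then have "of_int n \<ge> (1::real)" by simp
    then have "\<Theta> (t0+T) \<ge> 2*pi" using n by simp
    moreover have "\<Theta> (t0+T) < \<Theta> (t0+P)" using \<Theta>mono TP by simp
    ultimately show False using \<Theta>shiftP[of t0] \<Theta>0 by simp
  qed
  ultimately have TeqP: "T = P" by simp
  have \<Theta>T: "\<Theta> (t + T) = \<Theta> t + 2*pi" for t using \<Theta>shiftP TeqP by simp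
  have rT: "r (t + T) = r t" for t using rP TeqP by simp
  have DT: "D (t + T) = D t" for t using rT by (simp add: D_def)
  have prT: "pr (t + T) = pr t" for t using isT unfolding is_period_def by blast
  have "((\<lambda>t. \<phi> (t + T) - \<phi> t) has_real_derivative 0) (at t)" for t
  proof -
    have "((\<lambda>t. \<phi> (t + T)) has_real_derivative L/((r (t+T))^2 * D (t+T)) * 1) (at t)"
      by (rule DERIV_chain2[OF hphi]) (auto intro!: derivative_eq_intros)
    then have "((\<lambda>t. \<phi> (t + T)) has_real_derivative L/((r t)^2 * D t)) (at t)"
      by (simp add: rT DT)
    then show ?thesis using hphi[of t] by (auto intro!: derivative_eq_intros)
  qed
  then have \<phi>c: "\<phi> (t + T) - \<phi> t = \<phi> (t0 + T) - \<phi> t0" for t by (meson DERIV_isconst_all)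
  have \<phi>mono: "\<phi> x < \<phi> y" if "x < y" for x y
    using DERIV_pos_imp_increasing[OF that] hphi Dpos rpos assms(3)
    by (meson divide_pos_pos mult_pos_pos zero_less_power)
  have \<phi>cont: "isCont \<phi> t" for t using hphi DERIV_isCont by blast
  have \<phi>T0: "\<phi> (t0 + T) = 2*pi"
  proof (rule ccontr)
    assume ne: "\<phi> (t0 + T) \<noteq> 2*pi"
    obtain k :: int where k: "\<phi> (t0 + T) = \<phi> t0 + 2*pi * of_int k"
      using isT unfolding is_period_def by blast
    have "\<phi> (t0 + T) > 0" using \<phi>mono[of t0 "t0+T"] Tpos t0phi by simp
    then have "k > 0" using k t0phi by (simp add: zero_less_mult_iff)
    moreover have "k \<noteq> 1" using ne k t0phi by auto
    ultimately have "of_int k \<ge> (2::real)" by simp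
    then have ge: "\<phi> (t0 + T) \<ge> 2*pi" using k t0phi by simp
    have "\<exists>x\<ge>t0. x \<le> t0+T \<and> \<phi> x = 2*pi"
      by (rule IVT) (use t0phi ge Tpos \<phi>cont in auto)
    then obtain s where s1: "t0 \<le> s" and s2: "s \<le> t0 + T" and s3: "\<phi> s = 2*pi" by blast
    have "s \<noteq> t0" using s3 t0phi by auto
    moreover have "s \<noteq> t0 + T" using s3 ne by auto
    ultimately have sl: "t0 < s" "s < t0 + T" using s1 s2 by auto
    have "X s = r s" using s3 by (simp add: X_def)
    then have c: "a * cos (\<Theta> s) > 0" using Xe[of s] rpos[of s] by simp
    have "Y s = 0" using s3 by (simp add: Y_def)
    then have sn: "sin (\<Theta> s) = 0" using Ye[of s] bpos by simp
    have "cos (\<Theta> s) > 0" using c apos by (simp add: zero_less_mult_iff)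
    moreover have "(cos (\<Theta> s))^2 = 1" using sn sin_cos_squared_add[of "\<Theta> s"] by simp
    ultimately have "cos (\<Theta> s) = 1" using power2_eq_1_iff[of "cos (\<Theta> s)"] by auto
    then obtain m :: int where m: "\<Theta> s = of_int m * 2 * pi" using cos_one_2pi_int by blast
    have "\<Theta> s > 0" using \<Theta>mono[OF sl(1)] \<Theta>0 by simp
    moreover have "\<Theta> s < 2*pi" using \<Theta>mono[OF sl(2)] \<Theta>T[of t0] \<Theta>0 by simp
    ultimately have "(0::real) < of_int m" "of_int m < (1::real)" using m by (simp_all add: zero_less_mult_iff)
    then show False by simp
  qed
  have \<phi>T: "\<phi> T - \<phi> 0 = 2*pi" using \<phi>c[of 0] \<phi>T0 t0phi by simp
  have dphi: "deriv \<phi> t = L/((r t)^2 * D t)" for t using hphi by (rule DERIV_imp_deriv)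
  have dr: "deriv r t = pr t / D t" for t using hr by (rule DERIV_imp_deriv)
  have "((\<lambda>t. p\<phi> t * deriv \<phi> t) has_integral (L * \<phi> T - L * \<phi> 0)) {0..T}"
  proof (rule fundamental_theorem_of_calculus)
    show "0 \<le> T" using Tpos by simp
    fix x assume "x \<in> {0..T}"
    have "((\<lambda>t. L * \<phi> t) has_real_derivative L * (L/((r x)^2 * D x))) (at x)"
      using hphi[of x] by (auto intro!: derivative_eq_intros)
    then show "((\<lambda>t. L * \<phi> t) has_vector_derivative p\<phi> x * deriv \<phi> x) (at x within {0..T})"
      by (simp add: pphi dphi has_real_derivative_iff_has_vector_derivative[symmetric] has_field_derivative_at_within)
  qed
  note I\<phi> = integral_unique[OF this]
  have "L * \<phi> T - L * \<phi> 0 = L * (2*pi)" using \<phi>T by (simp add: right_diff_distrib[symmetric])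
  then have act\<phi>: "action p\<phi> \<phi> T = L"
    unfolding action_def I\<phi> by simp
  define F1 where "F1 t = r t * pr t / 2 + E * \<Theta> t / \<Omega> - L * \<phi> t" for t
  have "((\<lambda>t. pr t * deriv r t) has_integral (F1 T - F1 0)) {0..T}"
  proof (rule fundamental_theorem_of_calculus)
    show "0 \<le> T" using Tpos by simp
    fix x assume "x \<in> {0..T}"
    have "(F1 has_real_derivative
        (pr x / D x * pr x + r x * ((L^2/(r x)^3 - \<Omega>2 * r x) / D x)) / 2 + E * (\<Omega> / D x) / \<Omega> - L * (L / ((r x)^2 * D x))) (at x)"
      unfolding F1_def[abs_def] using \<Omega>pos by (auto intro!: derivative_eq_intros hr hpr h\<Theta> hphi simp: mult_ac)
    moreover have "(pr x / D x * pr x + r x * ((L^2/(r x)^3 - \<Omega>2 * r x) / D x)) / 2 + E * (\<Omega> / D x) / \<Omega> - L * (L / ((r x)^2 * D x))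
        = pr x * deriv r x"
    proof -
      have "2*E = (pr x)^2 + L^2/(r x)^2 + \<Omega>2*(r x)^2" using en2[of x] by simp
      then show ?thesis unfolding dr using \<Omega>pos Dpos[of x] rpos[of x]
        by (simp add: field_simps power2_eq_square power3_eq_cube)
    qed
    ultimately show "(F1 has_vector_derivative pr x * deriv r x) (at x within {0..T})"
      by (simp add: has_real_derivative_iff_has_vector_derivative[symmetric] has_field_derivative_at_within)
  qed
  moreover have "F1 T - F1 0 = 2*pi*E/\<Omega> - 2*pi*L"
  proof -
    have "r T = r 0" "pr T = pr 0" using rT[of 0] prT[of 0] by simp_all
    moreover have "\<Theta> T = \<Theta> 0 + 2*pi" using \<Theta>T[of 0] by simp
    moreover have "\<phi> T = \<phi> 0 + 2*pi" using \<phi>T by simp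
    ultimately show ?thesis unfolding F1_def using \<Omega>pos by (simp add: field_simps)
  qed
  ultimately have Ir: "integral {0..T} (\<lambda>t. pr t * deriv r t) = 2*pi*E/\<Omega> - 2*pi*L"
    using integral_unique by metis
  have actr: "action pr r T = E/\<Omega> - L"
    unfolding action_def Ir by (simp add: field_simps)
  have Jsum: "action pr r T + action p\<phi> \<phi> T = E/\<Omega>" using actr act\<phi> by simp
  have Epos: "E > 0"
  proof -
    have "L^2/(r t0)^2 > 0" using assms(3) rpos[of t0] by simp
    moreover have "\<Omega>2*(r t0)^2 \<ge> 0" using \<Omega>2pos by simp
    ultimately show ?thesis using en2[of t0] by (smt (verit) zero_le_power2)
  qed
  define J where "J = E/\<Omega>"
  have Jpos: "J > 0" using Epos \<Omega>pos by (simp add: J_def)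
  have JO: "J * \<Omega> = E" using \<Omega>pos by (simp add: J_def)
  have sq1: "sqrt (\<xi> + \<rho>^2 * J^2) = \<Omega> + \<rho> * J"
  proof (rule real_sqrt_unique)
    have "(\<Omega> + \<rho> * J)^2 = \<Omega>*\<Omega> + 2*\<rho>*(J*\<Omega>) + \<rho>^2*J^2" by (simp add: power2_eq_square algebra_simps)
    also have "\<dots> = \<xi> + \<rho>^2 * J^2" unfolding \<Omega>sq JO \<Omega>2_def by simp
    finally show "(\<Omega> + \<rho> * J)^2 = \<xi> + \<rho>^2 * J^2" .
    show "0 \<le> \<Omega> + \<rho> * J" using \<Omega>pos Jpos assms(1) by simp
  qed
  have sq2: "sqrt (\<xi> + \<rho>^2 * J^2) - \<rho> * J = \<Omega>" using sq1 by simp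
  have ident1: "\<And>(u::real) (l::real) (w::real) (c::real) (q::real) (e::real) (k::real). u^2 + l^2 + k*w^2 = 2*e \<Longrightarrow>
     (c^2 - q^2)*u*l + (2*q*c)*(e - l^2) = (u*c - l*q)*(u*q + l*c) + k*(w*c)*(w*q)"
    by algebra
  have ident2: "\<And>(u::real) (l::real) (w::real) (c::real) (q::real) (e::real) (k::real). u^2 + l^2 + k*w^2 = 2*e \<Longrightarrow>
     - (2*q*c)*u*l + (c^2 - q^2)*(e - l^2) = ((u*c - l*q)^2 - (u*q + l*c)^2 + k*((w*c)^2 - (w*q)^2))/2"
    by algebra
  have S1v: "S1 \<rho> \<xi> (r t) (\<phi> t) (pr t) (p\<phi> t) = 0" for t
  proof -
    have "S1 \<rho> \<xi> (r t) (\<phi> t) (pr t) (p\<phi> t)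
        = ((cos (\<phi> t))^2 - (sin (\<phi> t))^2)*pr t*(L / r t) + (2* sin (\<phi> t)*cos (\<phi> t))*(E - (L / r t)^2)"
      unfolding S1_def pphi en cos_double sin_double by (simp add: power_divide)
    also have "\<dots> = V t * W t + \<Omega>2 * X t * Y t"
      unfolding V_def W_def X_def Y_def
      using ident1[where u="pr t" and l="L / r t" and w="r t" and e=E and k=\<Omega>2 and c="cos (\<phi> t)" and q="sin (\<phi> t)"] en2[of t]
      by (simp add: power_divide)
    also have "\<dots> = 0" unfolding Ve We Xe Ye \<Omega>sq[symmetric] by (simp add: algebra_simps)
    finally show ?thesis .
  qed
  have ident3: "\<And>(a::real) (b::real) (w::real) (c::real) (q::real). c^2 + q^2 = 1 \<Longrightarrow>
     ((- a*w*q)^2 - (b*w*c)^2 + (w*w)*((a*c)^2 - (b*q)^2))/2 = (w*w)*(a^2-b^2)/2"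
    by algebra
  have S2v: "S2 \<rho> \<xi> (r t) (\<phi> t) (pr t) (p\<phi> t) = \<Omega>2*(a^2-b^2)/2" for t
  proof -
    have "S2 \<rho> \<xi> (r t) (\<phi> t) (pr t) (p\<phi> t)
        = - (2 * sin (\<phi> t)*cos (\<phi> t))*pr t*(L / r t) + ((cos (\<phi> t))^2 - (sin (\<phi> t))^2)*(E - (L / r t)^2)"
      unfolding S2_def pphi en cos_double sin_double by (simp add: power_divide)
    also have "\<dots> = ((V t)^2 - (W t)^2 + \<Omega>2 * ((X t)^2 - (Y t)^2))/2"
      unfolding V_def W_def X_def Y_def
      using ident2[where u="pr t" and l="L / r t" and w="r t" and e=E and k=\<Omega>2 and c="cos (\<phi> t)" and q="sin (\<phi> t)"] en2[of t]
      by (simp add: power_divide)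
    also have "\<dots> = \<Omega>2*(a^2-b^2)/2"
      unfolding Ve We Xe Ye \<Omega>sq[symmetric]
      by (rule ident3) (simp add: sin_cos_squared_add)
    finally show ?thesis .
  qed
  have "\<exists>x\<ge>t0. x \<le> t0+T \<and> \<Theta> x = pi/2"
    by (rule IVT) (use \<Theta>0 \<Theta>T[of t0] Tpos \<Theta>cont in auto)
  then obtain s where hs: "\<Theta> s = pi/2" by blast
  have "(r s)^2 = b^2" using r2[of s] unfolding hs by simp
  moreover have "a \<le> r s" using t0min by (simp add: a_def)
  ultimately have ab: "a^2 \<le> b^2" using apos by (metis power_mono less_imp_le)
  define u where "u = L^2/a^2"
  define v where "v = \<Omega>2 * a^2"
  have uv: "u + v = 2*E" using en2[of t0] pr0 by (simp add: u_def v_def a_def)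
  have uv2: "u * v = L^2 * \<Omega>2" using apos by (simp add: u_def v_def)
  have b2: "\<Omega>2 * b^2 = u" using apos \<Omega>pos unfolding b_def u_def \<Omega>sq[symmetric]
    by (simp add: power_divide power_mult_distrib power2_eq_square)
  have vu: "v \<le> u"
  proof -
    have "\<Omega>2 * a^2 \<le> \<Omega>2 * b^2" using ab \<Omega>2pos by simp
    then show ?thesis using b2 by (simp add: v_def)
  qed
  have identuv: "((u-v)/2)^2 = ((u+v)/2)^2 - u * v" by (simp add: power2_eq_square field_simps)
  have sq3: "sqrt (E^2 - L^2*\<Omega>2) = (u - v)/2"
    by (rule real_sqrt_unique) (use identuv uv uv2 vu in auto)
  have sq4: "sqrt (J^2 - L^2) * \<Omega> = sqrt (E^2 - L^2*\<Omega>2)"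
  proof -
    have "sqrt (J^2 - L^2) * \<Omega> = sqrt ((J^2 - L^2) * \<Omega>2)" unfolding \<Omega>_def by (simp add: real_sqrt_mult)
    moreover have "(J^2 - L^2) * \<Omega>2 = E^2 - L^2*\<Omega>2"
      unfolding \<Omega>sq[symmetric] JO[symmetric] by (simp add: power2_eq_square algebra_simps)
    ultimately show ?thesis by simp
  qed
  have S2fin: "\<Omega>2*(a^2-b^2)/2 = - sqrt (J^2 - L^2) * (sqrt (\<xi> + \<rho>^2 * J^2) - \<rho> * J)"
  proof -
    have "- sqrt (J^2 - L^2) * (sqrt (\<xi> + \<rho>^2 * J^2) - \<rho> * J) = - (sqrt (J^2 - L^2) * \<Omega>)"
      unfolding sq2 by simp
    also have "\<dots> = - ((u - v)/2)" unfolding sq4 sq3 ..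
    also have "\<dots> = \<Omega>2*(a^2-b^2)/2" using b2 by (simp add: v_def right_diff_distrib diff_divide_distrib)
    finally show ?thesis by simp
  qed
  have main: "L = L \<and> E/\<Omega> = E / sqrt (\<xi> - 2 * \<rho> * E)
    \<and> (E = J * (sqrt (\<xi> + \<rho>\<^sup>2 * J\<^sup>2) - \<rho> * J)
       \<and> (\<forall>t. S1 \<rho> \<xi> (r t) (\<phi> t) (pr t) (p\<phi> t) = 0)
       \<and> (\<forall>t. S2 \<rho> \<xi> (r t) (\<phi> t) (pr t) (p\<phi> t)
              = - sqrt (J\<^sup>2 - L\<^sup>2) * (sqrt (\<xi> + \<rho>\<^sup>2 * J\<^sup>2) - \<rho> * J)))"
  proof (intro conjI allI)
    show "L = L" by simp
    show "E/\<Omega> = E / sqrt (\<xi> - 2 * \<rho> * E)" by (simp only: \<Omega>_def \<Omega>2_def)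
    show "E = J * (sqrt (\<xi> + \<rho>\<^sup>2 * J\<^sup>2) - \<rho> * J)" unfolding sq2 using JO by simp
    fix t
    show "S1 \<rho> \<xi> (r t) (\<phi> t) (pr t) (p\<phi> t) = 0" by (rule S1v)
    show "S2 \<rho> \<xi> (r t) (\<phi> t) (pr t) (p\<phi> t)
              = - sqrt (J\<^sup>2 - L\<^sup>2) * (sqrt (\<xi> + \<rho>\<^sup>2 * J\<^sup>2) - \<rho> * J)"
      unfolding S2v S2fin ..
  qed
  show ?thesis
    unfolding Let_def
    apply (simp only: Jsum)
    apply (simp only: act\<phi>)
    using main unfolding J_def by blast
qed
end
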